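(* Let $\mathfrak L_1,\dots,\mathfrak L_n,\mathfrak L$ be complete lattices and let $(\mathcal F_\alpha)_{\alpha\in\mathcal O}$ be a family with $\mathcal F_\alpha:\mathfrak L_1\times\dots\times\mathfrak L_n\to(\mathfrak L\to^+\mathfrak L)$ which is $\limsup$-pushable in all arguments (i.e. the family of maps $(\vec{\mathcal G},\mathcal X)\mapsto\mathcal F_\alpha(\vec{\mathcal G})(\mathcal X)$ is $\limsup$-pushable). Then for every $\beta\in\mathcal O$ the family $\mathcal H_\alpha:\mathfrak L_1\times\dots\times\mathfrak L_n\to\mathfrak L$, $\mathcal H_\alpha(\vec{\mathcal G})=\nu^\beta(\mathcal F_\alpha(\vec{\mathcal G}))$, is $\limsup$-pushable.
   Context: $\mathcal O$ is the set of ordinals $\le\top_{\mathsf{ord}}$ for a fixed ordinal $\top_{\mathsf{ord}}$ ($=\beth_\omega$); $\lambda$ ranges over nonzero limit ordinals in $\mathcal O$. For a complete lattice $\mathfrak L$ and $f:\mathcal O\to\mathfrak L$: $\liminf_{\alpha\to\lambda}f(\alpha)=\sup_{\alpha_0<\lambda}\inf_{\alpha_0\le\alpha<\lambda}f(\alpha)$, $\limsup_{\alpha\to\lambda}f(\alpha)=\inf_{\alpha_0<\lambda}\sup_{\alpha_0\le\alpha<\lambda}f(\alpha)$; on products of lattices these are taken componentwise. $\mathfrak L\to^+\mathfrak L$ is the set of monotone maps. For $f:\mathfrak L\to\mathfrak L$ and $g\in\mathfrak L$, transfinite iteration: $f^0(g)=g$, $f^{\alpha+1}(g)=f(f^\alpha(g))$,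 $f^\lambda(g)=\limsup_{\alpha\to\lambda}f^\alpha(g)$; $\nu^\alpha f:=f^\alpha(\top)$, $\mu^\alpha f:=f^\alpha(\bot)$. A family $(\mathcal F_\alpha)_{\alpha\in\mathcal O}$ of maps $\mathfrak K\to\mathfrak K'$ between complete lattices is $\limsup$-pushable if for every $\mathcal G:\mathcal O\to\mathfrak K$ and every nonzero limit $\lambda$: $\limsup_{\alpha\to\lambda}\mathcal F_\gamma(\mathcal G_\alpha)\sqsubseteq\mathcal F_\gamma(\limsup_{\alpha\to\lambda}\mathcal G_\alpha)$ for all $\gamma\in\mathcal O$, and $\limsup_{\alpha\to\lambda}\mathcal F_\alpha(\mathcal G_\alpha)\sqsubseteq\mathcal F_\lambda(\limsup_{\alpha\to\lambda}\mathcal G_\alpha)$. *)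

theory Defs
  imports Main "HOL-Library.Product_Order"
begin

text \<open>Ordinals in O are modelled by the elements of an arbitrary well-ordered type 'o.\<close>

definition is_limit :: "'o::wellorder \<Rightarrow> bool" where
  "is_limit lam \<longleftrightarrow> (\<exists>a. a < lam) \<and> (\<forall>a. a < lam \<longrightarrow> (\<exists>c. a < c \<and> c < lam))"

definition limsup_at :: "('o::wellorder \<Rightarrow> 'a::complete_lattice) \<Rightarrow> 'o \<Rightarrow> 'a" where
  "limsup_at f lam = (INF a0\<in>{..<lam}. SUP a\<in>{a0..<lam}. f a)"

definition liminf_at :: "('o::wellorder \<Rightarrow> 'a::complete_lattice) \<Rightarrow> 'o \<Rightarrow> 'a" where
  "liminf_at f lam = (SUP a0\<in>{..<lam}. INF a\<in>{a0..<lam}. f a)"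

text \<open>Transfinite iteration: f^0 g = g, f^(a+1) g = f (f^a g), f^lam g = limsup.\<close>

definition iter :: "('a::complete_lattice \<Rightarrow> 'a) \<Rightarrow> 'a \<Rightarrow> 'o::wellorder \<Rightarrow> 'a" where
  "iter f g = wfrec {(x, y). x < y}
     (\<lambda>rec a. if \<not> (\<exists>b. b < a) then g
       else if (\<exists>b. b < a \<and> \<not> (\<exists>c. b < c \<and> c < a))
         then f (rec (THE b. b < a \<and> \<not> (\<exists>c. b < c \<and> c < a)))
       else limsup_at rec a)"

definition nu_iter :: "'o::wellorder \<Rightarrow> ('a::complete_lattice \<Rightarrow> 'a) \<Rightarrow> 'a" where
  "nu_iter b f = iter f top b"

definition mu_iter :: "'o::wellorder \<Rightarrow> ('a::complete_lattice \<Rightarrow> 'a) \<Rightarrow> 'a" where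
  "mu_iter b f = iter f bot b"

definition limsup_pushable :: "('o::wellorder \<Rightarrow> 'a::complete_lattice \<Rightarrow> 'b::complete_lattice) \<Rightarrow> bool" where
  "limsup_pushable F \<longleftrightarrow>
     (\<forall>G :: 'o \<Rightarrow> 'a. \<forall>lam. is_limit lam \<longrightarrow>
        (\<forall>c. limsup_at (\<lambda>a. F c (G a)) lam \<le> F c (limsup_at G lam)) \<and>
        limsup_at (\<lambda>a. F a (G a)) lam \<le> F lam (limsup_at G lam))"

end

theory Submission
  imports Defs
begin

lemma the_pred:
  fixes a b :: "'o::wellorder"
  assumes b: "b < a \<and> \<not> (\<exists>c. b < c \<and> c < a)"
  shows "(THE b. b < a \<and> \<not> (\<exists>c. b < c \<and> c < a)) = b"
proof (rule the_equality)
  show "b < a \<and> \<not> (\<exists>c. b < c \<and> c < a)" by (rule b)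
  fix x assume x: "x < a \<and> \<not> (\<exists>c. x < c \<and> c < a)"
  show "x = b"
  proof (rule linorder_cases[of x b])
    assume "x < b" then show ?thesis using x b by blast
  next
    assume "b < x" then show ?thesis using x b by blast
  qed
qed

lemma iter_eq:
  "iter f g (a::'o::wellorder) = (if \<not> (\<exists>b. b < a) then g
       else if (\<exists>b. b < a \<and> \<not> (\<exists>c. b < c \<and> c < a))
         then f (iter f g (THE b. b < a \<and> \<not> (\<exists>c. b < c \<and> c < a)))
       else limsup_at (iter f g) a)"
proof -
  let ?R = "{(x::'o, y). x < y}"
  let ?H = "(\<lambda>rec a. if \<not> (\<exists>b. b < a) then g
       else if (\<exists>b. b < a \<and> \<not> (\<exists>c. b < c \<and> c < a))
         then f (rec (THE b. b < a \<and> \<not> (\<exists>c. b < c \<and> c < a)))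
       else limsup_at rec a)"
  have 1: "iter f g a = ?H (cut (iter f g) ?R a) a"
    unfolding iter_def by (rule wfrec[OF wf])
  show ?thesis
  proof (cases "\<exists>b. b < a \<and> \<not> (\<exists>c. b < c \<and> c < a)")
    case True
    then obtain b where b: "b < a \<and> \<not> (\<exists>c. b < c \<and> c < a)" by blast
    have "(THE b. b < a \<and> \<not> (\<exists>c. b < c \<and> c < a)) < a"
      using the_pred[of b a] b by simp
    then have "cut (iter f g) ?R a (THE b. b < a \<and> \<not> (\<exists>c. b < c \<and> c < a)) = iter f g (THE b. b < a \<and> \<not> (\<exists>c. b < c \<and> c < a))"
      by (intro cut_apply) simp
    then show ?thesis using 1 True b by simp
  next
    case False
    have eq: "limsup_at (cut (iter f g) ?R a) a = limsup_at (iter f g) a"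
      unfolding limsup_at_def
      by (intro INF_cong SUP_cong refl) (auto simp: cut_apply)
    show ?thesis
      by (subst 1, simp only: if_not_P[OF False] eq)
  qed
qed

lemma iter_zero: "\<not> (\<exists>b. b < (a::'o::wellorder)) \<Longrightarrow> iter f g a = g"
  by (subst iter_eq) simp

lemma iter_succ:
  assumes "b < (a::'o::wellorder)" "\<not> (\<exists>c. b < c \<and> c < a)"
  shows "iter f g a = f (iter f g b)"
proof -
  have "(THE b. b < a \<and> \<not> (\<exists>c. b < c \<and> c < a)) = b"
    using assms by (intro the_pred) simp
  then show ?thesis using assms by (subst iter_eq) auto
qed

lemma iter_lim: "is_limit (a::'o::wellorder) \<Longrightarrow> iter f g a = limsup_at (iter f g) a"
  by (subst iter_eq) (auto simp: is_limit_def)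

lemma ord_cases:
  fixes a :: "'o::wellorder"
  obtains "\<not> (\<exists>b. b < a)" | b where "b < a" "\<not> (\<exists>c. b < c \<and> c < a)" | "is_limit a"
  unfolding is_limit_def by blast

lemma limsup_dec:
  fixes h :: "'o::wellorder \<Rightarrow> 'a::complete_lattice"
  assumes "\<And>x y. x \<le> y \<Longrightarrow> y < a \<Longrightarrow> h y \<le> h x"
  shows "limsup_at h a = (INF b\<in>{..<a}. h b)"
  unfolding limsup_at_def
proof (intro INF_cong refl)
  fix a0 assume "a0 \<in> {..<a}"
  then show "(SUP x\<in>{a0..<a}. h x) = h a0"
    using assms by (intro antisym SUP_least SUP_upper) auto
qed

lemma limsup_mono:
  "(\<And>a. f a \<le> g a) \<Longrightarrow> limsup_at f lam \<le> limsup_at g lam"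
  unfolding limsup_at_def by (intro INF_superset_mono SUP_mono') auto

lemma succ_exists:
  fixes c p :: "'o::wellorder"
  assumes "is_limit p" "c < p"
  obtains s where "c < s" "s < p" "\<not> (\<exists>e. c < e \<and> e < s)"
proof -
  obtain d where d: "c < d" "d < p" using assms unfolding is_limit_def by blast
  let ?s = "LEAST x. c < x"
  have "c < ?s" using d by (metis LeastI)
  moreover have "?s < p" using d by (meson Least_le le_less_trans)
  moreover have "\<not> (\<exists>e. c < e \<and> e < ?s)" using not_less_Least by blast
  ultimately show ?thesis using that by blast
qed

lemma iter_anti:
  fixes f :: "'a::complete_lattice \<Rightarrow> 'a"
  assumes mf: "mono f"
  shows "b \<le> (a::'o::wellorder) \<Longrightarrow> iter f top a \<le> iter f top b"
proof (induction a arbitrary: b rule: less_induct)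
  case (less a)
  show ?case
  proof (cases a rule: ord_cases)
    case 1
    then have "b = a" using less.prems by (metis le_less)
    then show ?thesis by simp
  next
    case (2 p)
    show ?thesis
    proof (cases "b = a")
      case True then show ?thesis by simp
    next
      case False
      then have bp: "b \<le> p" using less.prems 2 by (metis le_less not_le)
      have "f (iter f top p) \<le> iter f top p"
      proof (cases p rule: ord_cases)
        case 1 then show ?thesis by (simp add: iter_zero)
      next
        case (2 q)
        have "iter f top p \<le> iter f top q" using less.IH \<open>p < a\<close> 2 by simp
        then show ?thesis using 2 mf by (simp add: iter_succ monoD)
      next
        case 3
        have eq: "iter f top p = (INF c\<in>{..<p}. iter f top c)"
          using 3 \<open>p < a\<close> by (simp add: iter_lim, intro limsup_dec less.IH) auto
        show ?thesis
        proof (subst (2) eq, rule INF_greatest)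
          fix c assume c: "c \<in> {..<p}"
          then obtain s where s: "c < s" "s < p" "\<not> (\<exists>e. c < e \<and> e < s)"
            using succ_exists[OF 3] by blast
          have "iter f top p \<le> iter f top c" using eq c by (metis INF_lower)
          then have "f (iter f top p) \<le> f (iter f top c)" using mf by (simp add: monoD)
          also have "\<dots> = iter f top s" using s by (simp add: iter_succ)
          also have "\<dots> \<le> iter f top c" using less.IH s \<open>p < a\<close> by simp
          finally show "f (iter f top p) \<le> iter f top c" .
        qed
      qed
      then have "iter f top a \<le> iter f top p" using 2 by (simp add: iter_succ)
      also have "\<dots> \<le> iter f top b" using less.IH 2 bp by simp
      finally show ?thesis .
    qed
  next
    case 3
    have eq: "iter f top a = (INF c\<in>{..<a}. iter f top c)"
      using 3 by (simp add: iter_lim, intro limsup_dec less.IH) auto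
    show ?thesis
    proof (cases "b = a")
      case True then show ?thesis by simp
    next
      case False
      then have "b < a" using less.prems by simp
      then show ?thesis using eq by (metis INF_lower lessThan_iff)
    qed
  qed
qed

lemma iter_lim_INF:
  "mono f \<Longrightarrow> is_limit (a::'o::wellorder) \<Longrightarrow> iter f top a = (INF c\<in>{..<a}. iter f top c)"
  by (simp add: iter_lim, intro limsup_dec iter_anti) auto

lemma main:
  fixes Fs :: "'o::wellorder \<Rightarrow> 'l::complete_lattice \<Rightarrow> 'l" and T :: "'l \<Rightarrow> 'l"
  assumes mFs: "\<And>a. mono (Fs a)" and mT: "mono T"
    and K: "\<And>X. limsup_at (\<lambda>a. Fs a (X a)) lam \<le> T (limsup_at X lam)"
  shows "limsup_at (\<lambda>a. iter (Fs a) top \<beta>) lam \<le> iter T top (\<beta>::'o)"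
proof (induction \<beta> rule: less_induct)
  case (less \<beta>)
  show ?case
  proof (cases \<beta> rule: ord_cases)
    case 1 then show ?thesis by (simp add: iter_zero)
  next
    case (2 p)
    have "limsup_at (\<lambda>a. iter (Fs a) top \<beta>) lam = limsup_at (\<lambda>a. Fs a (iter (Fs a) top p)) lam"
      using 2 by (simp add: iter_succ)
    also have "\<dots> \<le> T (limsup_at (\<lambda>a. iter (Fs a) top p) lam)" by (rule K)
    also have "\<dots> \<le> T (iter T top p)" using less.IH 2 mT by (simp add: monoD)
    also have "\<dots> = iter T top \<beta>" using 2 by (simp add: iter_succ)
    finally show ?thesis .
  next
    case 3
    have "limsup_at (\<lambda>a. iter (Fs a) top \<beta>) lam
        = limsup_at (\<lambda>a. INF c\<in>{..<\<beta>}. iter (Fs a) top c) lam"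
      using 3 mFs by (simp add: iter_lim_INF)
    also have "\<dots> \<le> (INF c\<in>{..<\<beta>}. iter T top c)"
    proof (rule INF_greatest)
      fix c assume c: "c \<in> {..<\<beta>}"
      have "limsup_at (\<lambda>a. INF c\<in>{..<\<beta>}. iter (Fs a) top c) lam
           \<le> limsup_at (\<lambda>a. iter (Fs a) top c) lam"
        using c by (intro limsup_mono INF_lower)
      also have "\<dots> \<le> iter T top c" using less.IH c by simp
      finally show "limsup_at (\<lambda>a. INF c\<in>{..<\<beta>}. iter (Fs a) top c) lam \<le> iter T top c" .
    qed
    also have "\<dots> = iter T top \<beta>" using 3 mT by (simp add: iter_lim_INF)
    finally show ?thesis .
  qed
qed

lemma limsup_fst: "fst (limsup_at H lam) = limsup_at (\<lambda>a. fst (H a)) lam"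
  by (simp add: limsup_at_def fst_INF fst_SUP)

lemma limsup_snd: "snd (limsup_at H lam) = limsup_at (\<lambda>a. snd (H a)) lam"
  by (simp add: limsup_at_def snd_INF snd_SUP)

lemma pushD:
  assumes "limsup_pushable (\<lambda>a (GX :: 'k::complete_lattice \<times> 'l::complete_lattice). F a (fst GX) (snd GX) :: 'l)"
    and "is_limit (lam::'o::wellorder)"
  shows "(\<forall>c. limsup_at (\<lambda>a. F c (fst (GX a)) (snd (GX a))) lam \<le> F c (fst (limsup_at GX lam)) (snd (limsup_at GX lam))) \<and>
    limsup_at (\<lambda>a. F a (fst (GX a)) (snd (GX a))) lam \<le> F lam (fst (limsup_at GX lam)) (snd (limsup_at GX lam))"
  using assms unfolding limsup_pushable_def by blast

theorem lemma4p10: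
  fixes F :: "'o::wellorder \<Rightarrow> 'k::complete_lattice \<Rightarrow> 'l::complete_lattice \<Rightarrow> 'l"
    and beta :: 'o
  assumes mono: "\<And>a G. mono (F a G)"
    and push: "limsup_pushable (\<lambda>a (GX :: 'k \<times> 'l). F a (fst GX) (snd GX))"
  shows "limsup_pushable (\<lambda>a G. nu_iter beta (F a G))"
  unfolding limsup_pushable_def nu_iter_def
proof (intro allI impI conjI)
  fix G :: "'o \<Rightarrow> 'k" and lam :: 'o
  assume lim: "is_limit lam"
  have P: "\<And>X c. limsup_at (\<lambda>a. F c (G a) (X a)) lam \<le> F c (limsup_at G lam) (limsup_at X lam)"
  proof -
    fix X :: "'o \<Rightarrow> 'l" and c
    have "limsup_at (\<lambda>a. F c (fst (G a, X a)) (snd (G a, X a))) lam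
       \<le> F c (fst (limsup_at (\<lambda>a. (G a, X a)) lam)) (snd (limsup_at (\<lambda>a. (G a, X a)) lam))"
      using pushD[OF push lim, of "\<lambda>a. (G a, X a)"] by simp
    then show "limsup_at (\<lambda>a. F c (G a) (X a)) lam \<le> F c (limsup_at G lam) (limsup_at X lam)"
      by (simp add: limsup_fst limsup_snd)
  qed
  fix c
  show "limsup_at (\<lambda>a. iter (F c (G a)) top beta) lam \<le> iter (F c (limsup_at G lam)) top beta"
    by (rule main[OF mono mono P])
next
  fix G :: "'o \<Rightarrow> 'k" and lam :: 'o
  assume lim: "is_limit lam"
  have Q: "\<And>X. limsup_at (\<lambda>a. F a (G a) (X a)) lam \<le> F lam (limsup_at G lam) (limsup_at X lam)"
  proof -
    fix X :: "'o \<Rightarrow> 'l"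
    have "limsup_at (\<lambda>a. F a (fst (G a, X a)) (snd (G a, X a))) lam
       \<le> F lam (fst (limsup_at (\<lambda>a. (G a, X a)) lam)) (snd (limsup_at (\<lambda>a. (G a, X a)) lam))"
      using pushD[OF push lim, of "\<lambda>a. (G a, X a)"] by simp
    then show "limsup_at (\<lambda>a. F a (G a) (X a)) lam \<le> F lam (limsup_at G lam) (limsup_at X lam)"
      by (simp add: limsup_fst limsup_snd)
  qed
  show "limsup_at (\<lambda>a. iter (F a (G a)) top beta) lam \<le> iter (F lam (limsup_at G lam)) top beta"
    by (rule main[OF mono mono Q])
qed

end
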